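(* Let $p$ be an odd prime and $1\le\ell\le p-1$ with Legendre symbol $\left(\frac{4\ell+1}{p}\right)=-1$. Then for all $n,k\ge0$, $$b\!\left(2p^{2k+3}n+\frac{(4\ell+1)p^{2k+2}-1}{2}\right)\equiv 0\pmod 4.$$
   Context: The mock theta function $\mathcal{B}(q)=\sum_{n\ge0}\frac{q^n(-q;q^2)_n}{(q;q^2)_{n+1}}=\sum_{n\ge0}b(n)q^n$, where $(a;q)_n=\prod_{j=0}^{n-1}(1-aq^j)$. *)

theory Defs
  imports "HOL-Computational_Algebra.Formal_Power_Series" "HOL-Number_Theory.Number_Theory"
begin

definition qpoch :: "'a::comm_ring_1 fps \<Rightarrow> 'a fps \<Rightarrow> nat \<Rightarrow> 'a fps" where
  "qpoch a q n = (\<Prod>j<n. 1 - a * q ^ j)"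

definition B_term :: "nat \<Rightarrow> rat fps" where
  "B_term n = fps_X ^ n * qpoch (- fps_X) (fps_X ^ 2) n
              * inverse (qpoch fps_X (fps_X ^ 2) (Suc n))"

text \<open>b(m) = coefficient of q^m in B(q). Since B_term n has order at least n,
  only the summands n \<le> m contribute to the coefficient of q^m.\<close>
definition b :: "nat \<Rightarrow> rat" where
  "b m = fps_nth (\<Sum>n\<le>m. B_term n) m"

end

theory Submission
  imports Defs
begin

unbundle fps_syntax


definition fsum :: "(nat \<Rightarrow> rat fps) \<Rightarrow> rat fps" where
  "fsum f = Abs_fps (\<lambda>m. \<Sum>n\<le>m. f n $ m)"

definition okf :: "(nat \<Rightarrow> rat fps) \<Rightarrow> bool" where
  "okf f \<longleftrightarrow> (\<forall>n i. i < n \<longrightarrow> f n $ i = 0)"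

lemma fsum_nth: "fsum f $ m = (\<Sum>n\<le>m. f n $ m)"
  by (simp add: fsum_def)

lemma fsum_add: "fsum (\<lambda>n. f n + g n) = fsum f + fsum g"
  by (simp add: fps_eq_iff fsum_nth sum.distrib)

lemma fsum_diff: "fsum (\<lambda>n. f n - g n) = fsum f - fsum g"
  by (simp add: fps_eq_iff fsum_nth sum_subtractf)

lemma okf_add: "okf f \<Longrightarrow> okf g \<Longrightarrow> okf (\<lambda>n. f n + g n)"
  by (simp add: okf_def)

lemma okf_diff: "okf f \<Longrightarrow> okf g \<Longrightarrow> okf (\<lambda>n. f n - g n)"
  by (simp add: okf_def)

lemma okf_mult: assumes "okf f" shows "okf (\<lambda>n. c * f n)"
  unfolding okf_def
proof (intro allI impI)
  fix n i :: nat assume "i < n"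
  have "(c * f n) $ i = (\<Sum>j=0..i. c$j * f n $ (i - j))" by (rule fps_mult_nth)
  also have "\<dots> = 0" using assms \<open>i<n\<close> unfolding okf_def by (intro sum.neutral) auto
  finally show "(c * f n) $ i = 0" .
qed

lemma okf_Suc: "okf f \<Longrightarrow> okf (\<lambda>n. f (Suc n))"
  by (simp add: okf_def)

lemma fsum_mult: assumes "okf f" shows "fsum (\<lambda>n. c * f n) = c * fsum f"
proof (rule fps_ext)
  fix m
  have "fsum (\<lambda>n. c * f n) $ m = (\<Sum>n\<le>m. \<Sum>j=0..m. c$j * f n $ (m - j))"
    by (simp add: fsum_nth fps_mult_nth)
  also have "\<dots> = (\<Sum>j=0..m. \<Sum>n\<le>m. c$j * f n $ (m - j))" by (rule sum.swap)
  also have "\<dots> = (\<Sum>j=0..m. \<Sum>n\<le>m-j. c$j * f n $ (m - j))"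
  proof (rule sum.cong[OF refl])
    fix j assume j: "j \<in> {0..m}"
    have "(\<Sum>n\<le>m. c$j * f n $ (m - j)) = (\<Sum>n\<in>{..m-j} \<union> {m-j<..m}. c$j * f n $ (m - j))"
      using j by (intro sum.cong) auto
    also have "\<dots> = (\<Sum>n\<le>m-j. c$j * f n $ (m - j)) + (\<Sum>n\<in>{m-j<..m}. c$j * f n $ (m - j))"
      by (rule sum.union_disjoint) auto
    also have "(\<Sum>n\<in>{m-j<..m}. c$j * f n $ (m - j)) = 0"
      using assms unfolding okf_def by (intro sum.neutral) auto
    finally show "(\<Sum>n\<le>m. c$j * f n $ (m - j)) = (\<Sum>n\<le>m-j. c$j * f n $ (m - j))" by simp
  qed
  also have "\<dots> = (c * fsum f) $ m"
    by (simp add: fps_mult_nth fsum_nth sum_distrib_left)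
  finally show "fsum (\<lambda>n. c * f n) $ m = (c * fsum f) $ m" .
qed

lemma fsum_shift: assumes "okf f" shows "fsum f = f 0 + fsum (\<lambda>n. f (Suc n))"
proof (rule fps_ext)
  fix m
  have "fsum f $ m = f 0 $ m + (\<Sum>n<m. f (Suc n) $ m)"
    by (cases m) (simp_all add: fsum_nth sum.atMost_shift lessThan_Suc_atMost)
  also have "(\<Sum>n<m. f (Suc n) $ m) = (\<Sum>n\<le>m. f (Suc n) $ m)"
    using assms by (simp add: okf_def lessThan_Suc_atMost[symmetric] del: lessThan_Suc_atMost)
  finally show "fsum f $ m = (f 0 + fsum (\<lambda>n. f (Suc n))) $ m" by (simp add: fsum_nth)
qed

lemma fsum_telescope: assumes "okf h" shows "fsum (\<lambda>n. h (Suc n) - h n) = - h 0"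
  using fsum_shift[OF assms] by (simp add: fsum_diff)



abbreviation X :: "rat fps" where "X \<equiv> fps_X"

definition Pp :: "nat \<Rightarrow> nat \<Rightarrow> rat fps" where "Pp a n = (\<Prod>j<n. 1 + X^(a+2*j))"
definition Pm :: "nat \<Rightarrow> nat \<Rightarrow> rat fps" where "Pm a n = (\<Prod>j<n. 1 - X^(a+2*j))"

lemma Pp_0[simp]: "Pp a 0 = 1" by (simp add: Pp_def)
lemma Pm_0[simp]: "Pm a 0 = 1" by (simp add: Pm_def)
lemma Pp_Suc: "Pp a (Suc n) = Pp a n * (1 + X^(a+2*n))" by (simp add: Pp_def)
lemma Pm_Suc: "Pm a (Suc n) = Pm a n * (1 - X^(a+2*n))" by (simp add: Pm_def)

lemma Pp_shift: "Pp (a+2) n * (1 + X^a) = Pp a n * (1 + X^(a+2*n))"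
proof (induction n)
  case 0 then show ?case by simp
next
  case (Suc n)
  have "Pp (a+2) (Suc n) * (1 + X^a) = (Pp (a+2) n * (1 + X^a)) * (1 + X^(a+2+2*n))"
    by (simp add: Pp_Suc mult_ac)
  also have "\<dots> = Pp a n * (1 + X^(a+2*n)) * (1 + X^(a+2*Suc n))"
    by (simp only: Suc.IH) (simp add: add.assoc)
  also have "\<dots> = Pp a (Suc n) * (1 + X^(a+2*Suc n))"
    by (simp only: Pp_Suc)
  finally show ?case .
qed

lemma Pm_shift: "Pm (a+2) n * (1 - X^a) = Pm a n * (1 - X^(a+2*n))"
proof (induction n)
  case 0 then show ?case by simp
next
  case (Suc n)
  have "Pm (a+2) (Suc n) * (1 - X^a) = (Pm (a+2) n * (1 - X^a)) * (1 - X^(a+2+2*n))"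
    by (simp add: Pm_Suc mult_ac)
  also have "\<dots> = Pm a n * (1 - X^(a+2*n)) * (1 - X^(a+2*Suc n))"
    by (simp only: Suc.IH) (simp add: add.assoc)
  also have "\<dots> = Pm a (Suc n) * (1 - X^(a+2*Suc n))"
    by (simp only: Pm_Suc)
  finally show ?case .
qed

lemma one_pm_nth0: "m \<ge> 1 \<Longrightarrow> (1 + X^m) $ 0 = 1" "m \<ge> 1 \<Longrightarrow> (1 - X^m) $ 0 = 1"
  by auto

lemma Pp_nth0: "a \<ge> 1 \<Longrightarrow> Pp a n $ 0 = 1"
  by (induction n) (auto simp: Pp_Suc)
lemma Pm_nth0: "a \<ge> 1 \<Longrightarrow> Pm a n $ 0 = 1"
  by (induction n) (auto simp: Pm_Suc)

lemma inv_cancel: "(f::rat fps) $ 0 \<noteq> 0 \<Longrightarrow> f * inverse f = 1"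
  by (rule inverse_mult_eq_1')

lemma qpoch_Pp: "qpoch (- X) (X^2) n = Pp 1 n"
  by (simp add: qpoch_def Pp_def power_mult[symmetric])
lemma qpoch_Pm: "qpoch X (X^2) n = Pm 1 n"
  by (simp add: qpoch_def Pm_def power_mult[symmetric])

definition fterm :: "nat \<Rightarrow> nat \<Rightarrow> rat fps" where
  "fterm k n = Pp 1 n * X^((2*k+1)*n) * inverse (Pm 3 n)"

lemma B_term_eq: "B_term n = inverse (1 - X) * fterm 0 n"
proof -
  have e: "(1::nat)+2 = 3" by simp
  have "Pm 1 (Suc n) = Pm 3 n * (1 - X)"
    using Pm_shift[of 1 n, unfolded e] by (simp add: Pm_Suc)
  then show ?thesis
    unfolding B_term_def fterm_def qpoch_Pp qpoch_Pm fps_inverse_mult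
    by (simp add: mult_ac fps_inverse_mult)
qed



lemma lincomb: fixes l r lhs rhs cc :: "'a::comm_ring"
  assumes "l = r" "lhs - rhs = cc * (l - r)" shows "lhs = rhs"
  using assms by simp

lemma Xpow2: "m = u + v \<Longrightarrow> X^m = X^u * X^v" by (simp add: power_add)
lemma Xpow3: "m = u + v + w \<Longrightarrow> X^m = X^u * X^v * X^w" by (simp add: power_add)
lemma Xpow4: "m = u + v + w + z \<Longrightarrow> X^m = X^u * X^v * X^w * X^z" by (simp add: power_add)

lemma okf_X: assumes "\<And>n. \<exists>g. f n = X^(e n) * g" "\<And>n. n \<le> e n" shows "okf f"
  unfolding okf_def
proof (intro allI impI)
  fix n i :: nat assume "i < n"
  obtain g where "f n = X^(e n) * g" using assms(1) by blast
  moreover have "i < e n" using \<open>i<n\<close> assms(2)[of n] by linarith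
  ultimately show "f n $ i = 0" by (simp add: fps_X_power_mult_nth)
qed

lemma fterm_0: "fterm k 0 = 1" by (simp add: fterm_def)

lemma okf_fterm: "okf (fterm k)"
  by (rule okf_X[where e="\<lambda>n. (2*k+1)*n"]) (auto simp: fterm_def mult_ac)

lemma fterm_rec: "fterm k (Suc n) - X * fterm (Suc k) (Suc n) = X^(2*k+1) * (fterm k n + X * fterm (Suc k) n)"
proof -
  define a where "a = X^((2*k+1)*n)"
  define bb where "bb = X^(2*n)"
  define t where "t = X^(2*k+1)"
  define I where "I = inverse (Pm 3 n)"
  define c where "c = 1 - X*X*X * bb"
  define ic where "ic = inverse c"
  have cic: "c * ic = 1" unfolding ic_def c_def bb_def by (rule inv_cancel) simp
  have e1: "X^((2*k+1)*Suc n) = a*t" unfolding a_def t_def by (rule Xpow2) simp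
  have e2: "X^((2*Suc k+1)*Suc n) = a*bb*t*(X*X)" unfolding a_def t_def bb_def power2_eq_square[symmetric] by (rule Xpow4) (simp add: algebra_simps)
  have e3: "X^((2*Suc k+1)*n) = a*bb" unfolding a_def bb_def by (rule Xpow2) (simp add: algebra_simps)
  have e4: "X^(1+2*n) = X*bb" unfolding bb_def by (simp add: power_add)
  have pm: "inverse (Pm 3 (Suc n)) = I * ic"
    unfolding I_def ic_def c_def bb_def by (simp add: Pm_Suc fps_inverse_mult power_add power3_eq_cube)
  show ?thesis
    unfolding fterm_def Pp_Suc pm e1 e2 e3 e4 unfolding t_def[symmetric] I_def[symmetric] a_def[symmetric]
    apply (rule lincomb[OF cic, where cc="Pp 1 n * (1 + X*bb) * a * t * I"])
    unfolding c_def by (simp add: algebra_simps)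
qed

definition F :: "nat \<Rightarrow> rat fps" where "F k = fsum (fterm k)"

lemma F_rec: "(1 - X^(2*k+1)) * F k = (1 - X) + X * (1 + X^(2*k+1)) * F (Suc k)"
proof -
  define u where "u n = fterm k n - X * fterm (Suc k) n" for n
  have oku: "okf u" unfolding u_def by (intro okf_diff okf_fterm okf_mult)
  have "fsum u = F k - X * F (Suc k)"
    unfolding u_def F_def fsum_diff fsum_mult[OF okf_fterm] ..
  also have "fsum u = u 0 + fsum (\<lambda>n. u (Suc n))" by (rule fsum_shift[OF oku])
  also have "(\<lambda>n. u (Suc n)) = (\<lambda>n. X^(2*k+1) * (fterm k n + X * fterm (Suc k) n))"
    unfolding u_def fterm_rec ..
  also have "fsum \<dots> = X^(2*k+1) * (F k + X * F (Suc k))"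
    by (simp add: fsum_mult okf_add okf_fterm okf_mult fsum_add fsum_mult[OF okf_fterm] F_def)
  finally have "F k - X * F (Suc k) = (1 - X) + X^(2*k+1) * (F k + X * F (Suc k))"
    by (simp add: u_def fterm_0)
  then show ?thesis
    by (rule lincomb[where cc=1]) (simp add: algebra_simps)
qed



lemma Xpow5: "m = u + v + w + z + y \<Longrightarrow> X^m = X^u * X^v * X^w * X^z * X^y" by (simp add: power_add)

definition Aterm :: "nat \<Rightarrow> nat \<Rightarrow> rat fps" where
  "Aterm k n = X^(2*n*n + (2*k+2)*n) * (Pp 1 n * Pp (2*k+1) n) * inverse (Pm 3 n * Pm (2*k+1) (Suc n))"
definition gterm :: "nat \<Rightarrow> nat \<Rightarrow> rat fps" where
  "gterm k n = (1 + X^(4*n+2*k+2)) * Aterm k n"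
definition hterm :: "nat \<Rightarrow> nat \<Rightarrow> rat fps" where
  "hterm k n = - ((1 - X^(2*n+1)) * (1 - X^(2*k+1)) * Aterm k n)"

lemma WZ: "(1 - X^(2*k+1)) * gterm k n - X * (1 + X^(2*k+1)) * gterm (Suc k) n
           = hterm k (Suc n) - hterm k n"
proof -
  define W where "W = Aterm k n"
  define E where "E = X^(2*n*n + (2*k+2)*n)"
  define N0 where "N0 = Pp 1 n * Pp (2*k+1) n"
  define I0 where "I0 = inverse (Pm 3 n * Pm (2*k+1) (Suc n))"
  define xx where "xx = X^(2*n)"
  define t where "t = X^(2*k+1)"
  define d1 where "d1 = 1 - X*X*X*xx"
  define d2 where "d2 = 1 - t*X*X*xx"
  define d3 where "d3 = 1 + t"
  define id1 where "id1 = inverse d1"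
  define id2 where "id2 = inverse d2"
  define id3 where "id3 = inverse d3"
  define iD where "iD = id1 * id2 * id3"
  have c1: "d1 * id1 = 1" unfolding id1_def d1_def xx_def by (rule inv_cancel) simp
  have c2: "d2 * id2 = 1" unfolding id2_def d2_def xx_def t_def by (rule inv_cancel) simp
  have c3: "d3 * id3 = 1" unfolding id3_def d3_def t_def by (rule inv_cancel) simp
  have c4: "(1 - t) * inverse (1 - t) = 1" unfolding t_def by (rule inv_cancel) simp
  have W_eq: "W = E * N0 * I0" unfolding W_def Aterm_def E_def N0_def I0_def ..
  have p1: "X^(2*Suc n*Suc n + (2*k+2)*Suc n) = E * xx * xx * t * (X*X*X)"
    unfolding E_def xx_def t_def power3_eq_cube[symmetric] by (rule Xpow5) (simp add: algebra_simps)
  have p2: "X^(2*n*n + (2*Suc k+2)*n) = E * xx"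
    unfolding E_def xx_def by (rule Xpow2) (simp add: algebra_simps)
  have p3: "X^(1 + 2*n) = X * xx" unfolding xx_def by (simp add: power_add)
  have p3': "X^(2*k+1 + 2*n) = t * xx" unfolding xx_def t_def by (rule Xpow2) simp
  have p4: "X^(3 + 2*n) = X*X*X * xx" unfolding xx_def power3_eq_cube[symmetric] by (rule Xpow2) simp
  have p5: "X^(2*k+1 + 2*Suc n) = t * (X*X) * xx"
    unfolding xx_def t_def power2_eq_square[symmetric] by (rule Xpow3) simp
  have p6: "X^(4*n+2*k+2) = xx * xx * t * X"
    unfolding xx_def t_def using Xpow4[of "4*n+2*k+2" "2*n" "2*n" "2*k+1" 1] by simp
  have p7: "X^(4*n+2*Suc k+2) = xx * xx * t * (X*X*X)"
    unfolding xx_def t_def power3_eq_cube[symmetric] by (rule Xpow4) simp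
  have p8: "X^(2*Suc n+1) = X*X*X * xx"
    unfolding xx_def power3_eq_cube[symmetric] by (rule Xpow2) simp
  have p9: "X^(2*n+1) = X * xx" unfolding xx_def by (simp add: power_add)
  have k2: "2*Suc k+1 = 2*k+1+2" by simp
  have A1: "Aterm k (Suc n) = W * (xx*xx*t*(X*X*X)*(1+X*xx)*(1+t*xx)) * (id1*id2)"
  proof -
    have "Aterm k (Suc n) = X^(2*Suc n*Suc n + (2*k+2)*Suc n) *
            (Pp 1 n * (1 + X^(1+2*n)) * (Pp (2*k+1) n * (1 + X^(2*k+1+2*n)))) *
            inverse (Pm 3 n * (1 - X^(3+2*n)) * (Pm (2*k+1) (Suc n) * (1 - X^(2*k+1+2*Suc n))))"
      unfolding Aterm_def Pp_Suc Pm_Suc[of 3] Pm_Suc[of "2*k+1" "Suc n"] ..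
    also have "\<dots> = E * xx * xx * t * (X*X*X) * (Pp 1 n * (1 + X*xx) * (Pp (2*k+1) n * (1 + t*xx))) *
            (I0 * id1 * id2)"
      unfolding p1 p3 p3' p4 p5 I0_def id1_def id2_def d1_def d2_def fps_inverse_mult
      by (simp add: mult_ac)
    finally show ?thesis unfolding W_eq N0_def by (simp add: mult_ac)
  qed
  have A2: "Aterm (Suc k) n = W * (xx*(1+t*xx)*(1-t)) * (id2*id3)"
  proof -
    have pp: "Pp (2*k+1+2) n = Pp (2*k+1) n * (1 + t*xx) * id3"
    proof -
      have "Pp (2*k+1+2) n = Pp (2*k+1+2) n * (d3 * id3)" using c3 by simp
      also have "\<dots> = Pp (2*k+1) n * (1 + t*xx) * id3"
        using Pp_shift[of "2*k+1" n] unfolding d3_def t_def p3'[unfolded t_def]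
        by (simp add: mult_ac)
      finally show ?thesis .
    qed
    have pm: "inverse (Pm (2*k+1+2) (Suc n)) = inverse (Pm (2*k+1) (Suc n)) * id2 * (1 - t)"
    proof -
      have sh: "Pm (2*k+1+2) (Suc n) * (1 - t) = Pm (2*k+1) (Suc n) * d2"
        using Pm_shift[of "2*k+1" "Suc n"] unfolding d2_def t_def p5[unfolded t_def]
        by (simp add: mult_ac)
      have "inverse (Pm (2*k+1+2) (Suc n)) = inverse (Pm (2*k+1+2) (Suc n) * (1 - t)) * (1 - t)"
        using c4 by (simp add: fps_inverse_mult mult_ac)
      also have "\<dots> = inverse (Pm (2*k+1) (Suc n)) * id2 * (1 - t)"
        unfolding sh id2_def fps_inverse_mult ..
      finally show ?thesis .
    qed
    have "Aterm (Suc k) n = X^(2*n*n + (2*Suc k+2)*n) * (Pp 1 n * Pp (2*k+1+2) n) *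
            inverse (Pm 3 n * Pm (2*k+1+2) (Suc n))"
      unfolding Aterm_def k2 ..
    also have "\<dots> = E * xx * (Pp 1 n * (Pp (2*k+1) n * (1 + t*xx) * id3)) *
            (inverse (Pm 3 n) * (inverse (Pm (2*k+1) (Suc n)) * id2 * (1 - t)))"
      unfolding p2 pp fps_inverse_mult pm ..
    finally show ?thesis unfolding W_eq N0_def I0_def fps_inverse_mult by (simp add: mult_ac)
  qed
  have T1: "(1 - X^(2*k+1)) * gterm k n = W * ((1-t)*(1 + xx*xx*t*X) * d1*d2*d3) * iD"
  proof -
    have "(1 - X^(2*k+1)) * gterm k n = W * ((1-t)*(1 + xx*xx*t*X)) * ((d1*id1)*(d2*id2)*(d3*id3))"
      unfolding gterm_def p6 W_def t_def c1 c2 c3 by simp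
    then show ?thesis unfolding iD_def by (simp add: mult_ac)
  qed
  have T2: "X * (1 + X^(2*k+1)) * gterm (Suc k) n
      = W * (X*(1+t)*(1 + xx*xx*t*(X*X*X))*(xx*(1+t*xx)*(1-t)) * d1) * iD"
  proof -
    have "X * (1 + X^(2*k+1)) * gterm (Suc k) n
      = W * (X*(1+t)*(1 + xx*xx*t*(X*X*X))*(xx*(1+t*xx)*(1-t))) * (id2*id3) * (d1*id1)"
      unfolding gterm_def p7 A2 t_def c1 by (simp add: mult_ac)
    then show ?thesis unfolding iD_def by (simp add: mult_ac)
  qed
  have T3: "hterm k (Suc n) = W * (- (d1 * (1-t) * (xx*xx*t*(X*X*X)*(1+X*xx)*(1+t*xx))) * d3) * iD"
  proof -
    have "hterm k (Suc n) = W * (- (d1 * (1-t) * (xx*xx*t*(X*X*X)*(1+X*xx)*(1+t*xx)))) * (id1*id2) * (d3*id3)"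
      unfolding hterm_def A1 p8 t_def d1_def c3 by (simp add: mult_ac)
    then show ?thesis unfolding iD_def by (simp add: mult_ac)
  qed
  have T4: "hterm k n = W * (- ((1 - X*xx)*(1-t)) * d1*d2*d3) * iD"
  proof -
    have "hterm k n = W * (- ((1 - X*xx)*(1-t))) * ((d1*id1)*(d2*id2)*(d3*id3))"
      unfolding hterm_def p9 W_def t_def c1 c2 c3 by simp
    then show ?thesis unfolding iD_def by (simp add: mult_ac)
  qed
  have poly: "(1-t)*(1 + xx*xx*t*X) * d1*d2*d3 - X*(1+t)*(1 + xx*xx*t*(X*X*X))*(xx*(1+t*xx)*(1-t)) * d1
      = - (d1 * (1-t) * (xx*xx*t*(X*X*X)*(1+X*xx)*(1+t*xx))) * d3 - (- ((1 - X*xx)*(1-t)) * d1*d2*d3)"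
    unfolding d1_def d2_def d3_def by (simp add: algebra_simps)
  show ?thesis unfolding T1 T2 T3 T4
    by (rule lincomb[OF poly, where cc="W*iD"]) (simp add: algebra_simps)
qed



lemma okf_gterm: "okf (gterm k)"
  by (rule okf_X[where e="\<lambda>n. 2*n*n + (2*k+2)*n"]) (auto simp: gterm_def Aterm_def mult_ac)

lemma okf_hterm: "okf (hterm k)"
proof (rule okf_X[where e="\<lambda>n. 2*n*n + (2*k+2)*n"])
  fix n
  show "\<exists>g. hterm k n = X ^ (2*n*n + (2*k+2)*n) * g"
    by (rule exI[where x="- ((1 - X^(2*n+1)) * (1 - X^(2*k+1)) * ((Pp 1 n * Pp (2*k+1) n) * inverse (Pm 3 n * Pm (2*k+1) (Suc n))))"])
      (simp add: hterm_def Aterm_def mult_ac)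
qed simp

definition G :: "nat \<Rightarrow> rat fps" where "G k = fsum (gterm k)"

lemma G_rec: "(1 - X^(2*k+1)) * G k = (1 - X) + X * (1 + X^(2*k+1)) * G (Suc k)"
proof -
  have "(1 - X^(2*k+1)) * G k - X * (1 + X^(2*k+1)) * G (Suc k)
     = fsum (\<lambda>n. (1 - X^(2*k+1)) * gterm k n - X * (1 + X^(2*k+1)) * gterm (Suc k) n)"
    unfolding fsum_diff G_def fsum_mult[OF okf_gterm] by (simp add: mult.assoc)
  also have "\<dots> = fsum (\<lambda>n. hterm k (Suc n) - hterm k n)" unfolding WZ ..
  also have "\<dots> = - hterm k 0" by (rule fsum_telescope[OF okf_hterm])
  also have "\<dots> = (1 - X) * ((1 - X^(2*k+1)) * inverse (1 - X^(2*k+1)))"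
    by (simp add: hterm_def Aterm_def Pm_Suc mult_ac)
  also have "\<dots> = 1 - X" by (subst inv_cancel) auto
  finally show ?thesis by (rule lincomb[where cc=1]) (simp add: algebra_simps)
qed

lemma mult_zero_below: assumes "\<forall>i<j. (f::rat fps) $ i = 0" "i < j" shows "(c * f) $ i = 0"
proof -
  have "(c * f) $ i = (\<Sum>l=0..i. c$l * f $ (i - l))" by (rule fps_mult_nth)
  also have "\<dots> = 0" using assms by (intro sum.neutral) auto
  finally show ?thesis .
qed

lemma F_eq_G: "F 0 = G 0"
proof -
  define H where "H k = F k - G k" for k
  have rec: "(1 - X^(2*k+1)) * H k = X * ((1 + X^(2*k+1)) * H (Suc k))" for k
  proof -
    have "(1 - X^(2*k+1)) * H k - X * ((1 + X^(2*k+1)) * H (Suc k))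
       = ((1 - X^(2*k+1)) * F k - ((1 - X) + X * (1 + X^(2*k+1)) * F (Suc k)))
         - ((1 - X^(2*k+1)) * G k - ((1 - X) + X * (1 + X^(2*k+1)) * G (Suc k)))"
      unfolding H_def by (simp add: algebra_simps)
    also have "\<dots> = 0" unfolding F_rec G_rec by simp
    finally show ?thesis by simp
  qed
  have Hk: "H k = inverse (1 - X^(2*k+1)) * (X * ((1 + X^(2*k+1)) * H (Suc k)))" for k
  proof -
    have "H k = (inverse (1 - X^(2*k+1)) * (1 - X^(2*k+1))) * H k"
      by (subst inverse_mult_eq_1) auto
    also have "\<dots> = inverse (1 - X^(2*k+1)) * (X * ((1 + X^(2*k+1)) * H (Suc k)))"
      by (simp only: mult.assoc rec)
    finally show ?thesis .
  qed
  have "\<forall>k. \<forall>i<j. H k $ i = 0" for j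
  proof (induction j)
    case 0 then show ?case by simp
  next
    case (Suc j)
    show ?case
    proof (intro allI impI)
      fix k i assume "i < Suc j"
      have z: "\<forall>i<Suc j. (X * ((1 + X^(2*k+1)) * H (Suc k))) $ i = 0"
      proof (intro allI impI)
        fix i assume "i < Suc j"
        show "(X * ((1 + X^(2*k+1)) * H (Suc k))) $ i = 0"
        proof (cases i)
          case 0 then show ?thesis by simp
        next
          case (Suc i') then have "i' < j" using \<open>i < Suc j\<close> by simp
          then have "((1 + X^(2*k+1)) * H (Suc k)) $ i' = 0"
            using Suc.IH by (intro mult_zero_below[of j]) auto
          then show ?thesis using Suc by simp
        qed
      qed
      show "H k $ i = 0" by (subst Hk) (rule mult_zero_below[OF z \<open>i < Suc j\<close>])
    qed
  qed
  then have "H 0 = 0" by (intro fps_ext) auto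
  then show ?thesis unfolding H_def by simp
qed

definition cterm :: "nat \<Rightarrow> rat fps" where "cterm n = inverse (1 - X) * gterm 0 n"

lemma b_eq: "b m = fsum cterm $ m"
proof -
  have "fsum B_term = inverse (1 - X) * F 0"
    unfolding B_term_eq F_def by (rule fsum_mult[OF okf_fterm])
  also have "\<dots> = fsum cterm" unfolding F_eq_G G_def cterm_def by (rule fsum_mult[OF okf_gterm, symmetric])
  finally have "fsum B_term $ m = fsum cterm $ m" by simp
  then show ?thesis by (simp add: b_def fsum_nth fps_sum_nth)
qed



definition IZ :: "rat fps \<Rightarrow> bool" where "IZ f \<longleftrightarrow> (\<forall>i. f $ i \<in> \<int>)"
definition EVN :: "rat fps \<Rightarrow> bool" where "EVN f \<longleftrightarrow> (\<forall>i. odd i \<longrightarrow> f $ i = 0)"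

lemma IZ_add: "IZ f \<Longrightarrow> IZ g \<Longrightarrow> IZ (f + g)" by (simp add: IZ_def)
lemma IZ_diff: "IZ f \<Longrightarrow> IZ g \<Longrightarrow> IZ (f - g)" by (simp add: IZ_def)
lemma IZ_mult: "IZ f \<Longrightarrow> IZ g \<Longrightarrow> IZ (f * g)"
  unfolding IZ_def fps_mult_nth by (auto intro!: Ints_sum)
lemma IZ_1: "IZ 1" by (simp add: IZ_def)
lemma IZ_numeral: "IZ (numeral k)" by (simp add: IZ_def fps_numeral_nth)
lemma IZ_Xp: "IZ (X^k)" by (simp add: IZ_def)

lemma EVN_add: "EVN f \<Longrightarrow> EVN g \<Longrightarrow> EVN (f + g)" by (simp add: EVN_def)
lemma EVN_1: "EVN 1" by (simp add: EVN_def)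
lemma EVN_mult: assumes "EVN f" "EVN g" shows "EVN (f * g)"
  unfolding EVN_def
proof (intro allI impI)
  fix i :: nat assume "odd i"
  have "(f * g) $ i = (\<Sum>l=0..i. f$l * g$(i - l))" by (rule fps_mult_nth)
  also have "\<dots> = 0"
  proof (intro sum.neutral ballI)
    fix l assume "l \<in> {0..i}"
    then have "odd l \<or> odd (i - l)" using \<open>odd i\<close> by auto
    then show "f$l * g$(i - l) = 0"
    proof
      assume "odd l" then show ?thesis using assms(1) unfolding EVN_def by simp
    next
      assume "odd (i - l)" then show ?thesis using assms(2) unfolding EVN_def by simp
    qed
  qed
  finally show "(f * g) $ i = 0" .
qed
lemma EVN_Xp: "even k \<Longrightarrow> EVN (X^k)" by (auto simp: EVN_def)

lemma inv_one_minus: assumes "m \<ge> 1"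
  shows "inverse (1 - X^m) = Abs_fps (\<lambda>i. if m dvd i then 1 else 0)"
proof (rule fps_inverse_unique, rule fps_ext)
  fix i
  show "((1 - X^m) * Abs_fps (\<lambda>i. if m dvd i then 1 else 0)) $ i = (1::rat fps) $ i"
  proof (cases "i < m")
    case True
    then have "m dvd i \<longleftrightarrow> i = 0" using assms by (auto dest: dvd_imp_le)
    then show ?thesis using True by (simp add: algebra_simps fps_X_power_mult_nth)
  next
    case False
    then have "m dvd i \<longleftrightarrow> m dvd (i - m)" using dvd_minus_self by auto
    then show ?thesis using False assms by (simp add: algebra_simps fps_X_power_mult_nth)
  qed
qed

lemma IZ_inv: "m \<ge> 1 \<Longrightarrow> IZ (inverse (1 - X^m))"
  by (simp add: inv_one_minus IZ_def)
lemma EVN_inv: "m \<ge> 1 \<Longrightarrow> even m \<Longrightarrow> EVN (inverse (1 - X^m))"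
  by (auto simp: inv_one_minus EVN_def dest: dvd_trans[of 2 m])

lemma sq_step: fixes x ix :: "rat fps" assumes "(1 - x) * ix = 1"
  shows "((1 + x) * ix) * ((1 + x) * ix) = 1 + 4 * (x * ix + x * x * ix * ix)"
  by (rule lincomb[OF assms, where cc="(1 - x) * ix + 1 + 4 * x * ix"]) (simp add: algebra_simps)

definition RR :: "nat \<Rightarrow> rat fps" where "RR n = Pp 1 n * inverse (Pm 1 n)"

lemma RR_sq: "\<exists>Z. IZ Z \<and> RR n * RR n = 1 + 4 * Z"
proof (induction n)
  case 0 then show ?case by (intro exI[of _ 0]) (simp add: RR_def IZ_def)
next
  case (Suc n)
  then obtain Z where Z: "IZ Z" "RR n * RR n = 1 + 4 * Z" by blast
  define x where "x = X^(1+2*n)"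
  define ix where "ix = inverse (1 - x)"
  have s: "(1 - x) * ix = 1" unfolding ix_def x_def by (rule inv_cancel) simp
  have "RR (Suc n) = RR n * ((1 + x) * ix)"
    unfolding RR_def Pp_Suc Pm_Suc fps_inverse_mult x_def ix_def by (simp add: mult_ac)
  then have "RR (Suc n) * RR (Suc n) = (RR n * RR n) * (((1 + x) * ix) * ((1 + x) * ix))"
    by (simp add: mult_ac)
  also have "\<dots> = (1 + 4 * Z) * (1 + 4 * (x * ix + x * x * ix * ix))"
    unfolding sq_step[OF s] Z(2) ..
  also have "\<dots> = 1 + 4 * (Z + (x * ix + x * x * ix * ix) + 4 * Z * (x * ix + x * x * ix * ix))"
    by (simp add: algebra_simps)
  finally have cal: "RR (Suc n) * RR (Suc n) = 1 + 4 * (Z + (x * ix + x * x * ix * ix) + 4 * Z * (x * ix + x * x * ix * ix))" .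
  have iz: "IZ (Z + (x * ix + x * x * ix * ix) + 4 * Z * (x * ix + x * x * ix * ix))"
    unfolding x_def ix_def by (intro IZ_add IZ_mult IZ_numeral IZ_Xp IZ_inv Z(1); simp)
  show ?case using cal iz by blast
qed

lemma cterm_eq: "cterm n = X^(2*n*n+2*n) * (1 + X^(4*n+2)) * (RR n * RR n) *
     (inverse (1 - X^(2*n+1)) * inverse (1 - X^(2*n+1)))"
proof -
  have e: "(1::nat)+2 = 3" by simp
  have e2: "(1::nat) + 2*n = 2*n+1" by simp
  have h2: "Pm 3 n * (1 - X) = Pm 1 n * (1 - X^(2*n+1))"
    using Pm_shift[of 1 n, unfolded e e2] by simp
  have a0: "Aterm 0 n = X^(2*n*n+2*n) * (Pp 1 n * Pp 1 n) * inverse (Pm 3 n * Pm 1 (Suc n))"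
    by (simp add: Aterm_def)
  have i: "inverse (1 - X) * inverse (Pm 3 n) = inverse (Pm 1 n) * inverse (1 - X^(2*n+1))"
    using arg_cong[of _ _ inverse, OF h2] by (simp add: fps_inverse_mult mult_ac)
  have "cterm n = X^(2*n*n+2*n) * (1 + X^(4*n+2)) * (Pp 1 n * Pp 1 n) *
     ((inverse (1 - X) * inverse (Pm 3 n)) * (inverse (Pm 1 n) * inverse (1 - X^(2*n+1))))"
    unfolding cterm_def gterm_def a0 fps_inverse_mult Pm_Suc[of 1 n] e2
    by (simp add: mult_ac)
  also have "\<dots> = X^(2*n*n+2*n) * (1 + X^(4*n+2)) * (RR n * RR n) *
     (inverse (1 - X^(2*n+1)) * inverse (1 - X^(2*n+1)))"
    unfolding i RR_def by (simp add: mult_ac)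
  finally show ?thesis .
qed

lemma cterm_decomp: "\<exists>Od J. IZ Od \<and> IZ J \<and> (\<forall>m. even m \<longrightarrow> Od $ m = 0) \<and>
    cterm n = X^(2*n*n+2*n) + 2 * Od + 4 * J"
proof -
  obtain Z where Z: "IZ Z" "RR n * RR n = 1 + 4 * Z" using RR_sq by blast
  define x where "x = X^(2*n+1)"
  define y where "y = x * x"
  define ix where "ix = inverse (1 - x)"
  define iy where "iy = inverse (1 - y)"
  have y2: "y = X^(4*n+2)" unfolding y_def x_def power_add[symmetric] by (simp add: algebra_simps)
  have sy: "(1 - y) * iy = 1" unfolding iy_def y2 by (rule inv_cancel) simp
  have ixe: "ix = (1 + x) * iy"
    unfolding ix_def
  proof (rule fps_inverse_unique)
    show "(1 - x) * ((1 + x) * iy) = 1" using sy unfolding y_def by (simp add: algebra_simps)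
  qed
  define U where "U = y * iy * iy"
  define V where "V = (1 + y) * iy * iy"
  have key: "(1 + y) * (ix * ix) = 1 + 4 * U + 2 * x * V"
    unfolding ixe U_def V_def
    by (rule lincomb[OF sy, where cc="(1 - y) * iy + 1"]) (simp add: y_def algebra_simps)
  define E where "E = X^(2*n*n+2*n)"
  have c: "cterm n = E * ((1 + y) * (ix * ix)) * (RR n * RR n)"
    unfolding cterm_eq E_def y2[symmetric] ix_def x_def by (simp add: mult_ac)
  define Od where "Od = E * x * V"
  define J where "J = E * (U + Z + 4 * U * Z + 2 * x * V * Z)"
  have "cterm n = E + 2 * Od + 4 * J"
    unfolding c key Z(2) Od_def J_def by (simp add: algebra_simps)
  moreover have "IZ Od" "IZ J"
    unfolding Od_def J_def E_def U_def V_def x_def y2 iy_def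
    by (intro IZ_mult IZ_add IZ_Xp IZ_1 IZ_inv IZ_numeral Z(1); simp)+
  moreover have "\<forall>m. even m \<longrightarrow> Od $ m = 0"
  proof (intro allI impI)
    fix m :: nat assume "even m"
    have ev: "EVN V" unfolding V_def y2 iy_def
      by (intro EVN_mult EVN_add EVN_1 EVN_Xp EVN_inv) auto
    have "Od = X^(2*n*n+2*n + (2*n+1)) * V" unfolding Od_def E_def x_def by (simp only: power_add mult.assoc)
    then have "Od $ m = (if m < 2*n*n+2*n + (2*n+1) then 0 else V $ (m - (2*n*n+2*n + (2*n+1))))"
      by (simp only: fps_X_power_mult_nth)
    moreover have "m \<ge> 2*n*n+2*n + (2*n+1) \<Longrightarrow> odd (m - (2*n*n+2*n + (2*n+1)))"
      using \<open>even m\<close> by (auto simp: even_diff_nat)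
    ultimately show "Od $ m = 0" using ev unfolding EVN_def by auto
  qed
  ultimately show ?thesis unfolding E_def by blast
qed

lemma b_mod4: assumes "even m" "\<forall>n. m \<noteq> 2*n*n+2*n" shows "\<exists>c::int. b m = 4 * of_int c"
proof -
  have "\<forall>n. \<exists>j. j \<in> \<int> \<and> cterm n $ m = 4 * j"
  proof
    fix n
    obtain Od J where OJ: "IZ Od" "IZ J" "\<forall>m. even m \<longrightarrow> Od $ m = 0" "cterm n = X^(2*n*n+2*n) + 2 * Od + 4 * J"
      using cterm_decomp by blast
    have "cterm n $ m = 4 * J $ m"
      using OJ(3) assms unfolding OJ(4) by (simp add: fps_numeral_fps_const)
    then show "\<exists>j. j \<in> \<int> \<and> cterm n $ m = 4 * j" using OJ(2) unfolding IZ_def by blast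
  qed
  then obtain j where j: "\<And>n. j n \<in> \<int>" "\<And>n. cterm n $ m = 4 * j n" by metis
  have "b m = 4 * (\<Sum>n\<le>m. j n)" unfolding b_eq fsum_nth j(2) by (simp add: sum_distrib_left)
  moreover have "(\<Sum>n\<le>m. j n) \<in> \<int>" using j(1) by auto
  ultimately show ?thesis by (metis Ints_cases)
qed



lemma sq_extract:
  fixes p M s :: nat
  assumes "prime p" "\<not> p dvd M" "p^(2*i) * M = s^2"
  shows "\<exists>t. M = t^2"
  using assms(3)
proof (induction i arbitrary: s)
  case 0 then show ?case by auto
next
  case (Suc i)
  have e: "2*Suc i = Suc (2*i+1)" by simp
  have "s^2 = p * (p^(2*i+1) * M)" using Suc.prems unfolding e power_Suc by (simp add: mult_ac)
  then have "p dvd s^2" by (rule dvdI)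
  then have "p dvd s" using assms(1) prime_dvd_power by blast
  then obtain s' where s': "s = p * s'" by blast
  have e2: "2*Suc i = 2 + 2*i" by simp
  have pp: "p^(2*Suc i) = p^2*p^(2*i)" unfolding e2 power_add ..
  have "p^2 * (p^(2*i) * M) = p^2 * s'^2"
    using Suc.prems unfolding s' pp power_mult_distrib by (simp only: mult.assoc)
  moreover have "p^2 \<noteq> 0" using assms(1) by (simp add: prime_gt_0_nat)
  ultimately have "p^(2*i) * M = s'^2" using mult_left_cancel by blast
  then show ?case by (rule Suc.IH)
qed

lemma m_facts:
  fixes p l n k :: nat
  assumes "prime p" "odd p" "1 \<le> l" "l \<le> p - 1"
    and leg: "Legendre (int (4 * l + 1)) (int p) = -1"
  defines "m \<equiv> 2 * p ^ (2 * k + 3) * n + ((4 * l + 1) * p ^ (2 * k + 2) - 1) div 2"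
  shows "even m" "\<forall>j. m \<noteq> 2*j*j + 2*j"
proof -
  define M where "M = 4*p*n + (4*l+1)"
  have "odd (p^(k+1))" using assms(2) by simp
  then obtain r where r: "p^(k+1) = 2*r+1" by (rule oddE)
  have e: "2*k+2 = (k+1)*2" by simp
  have P: "p^(2*k+2) = (2*r+1)^2" unfolding e power_mult r ..
  have oddP: "odd ((4 * l + 1) * p ^ (2 * k + 2))" using assms(2) by simp
  have m2: "2*m + 1 = p^(2*k+2) * M"
  proof -
    have "2 * (((4 * l + 1) * p ^ (2 * k + 2) - 1) div 2) = (4 * l + 1) * p ^ (2 * k + 2) - 1"
      using oddP by (simp add: odd_two_times_div_two_nat)
    moreover have "(4 * l + 1) * p ^ (2 * k + 2) \<ge> 1" using oddP by (cases "(4 * l + 1) * p ^ (2 * k + 2)") auto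
    moreover have "p ^ (2 * k + 3) = p^(2*k+2) * p"
    proof -
      have "2*k+3 = Suc (2*k+2)" by simp
      then show ?thesis by (simp only: power_Suc2)
    qed
    ultimately show ?thesis unfolding m_def M_def by (simp add: algebra_simps)
  qed
  have "2*m + 1 = 4 * ((r*r + r) * M + p*n + l) + 1"
    unfolding m2 P M_def by (simp add: algebra_simps power2_eq_square)
  then have "m = 2 * ((r*r + r) * M + p*n + l)" by simp
  then show "even m" by simp
  show "\<forall>j. m \<noteq> 2*j*j + 2*j"
  proof (intro allI notI)
    fix j assume "m = 2*j*j + 2*j"
    then have sq: "p^(2*(k+1)) * M = (2*j+1)^2" using m2 by (simp add: power2_eq_square algebra_simps)
    have na: "\<not> [int (4*l+1) = 0] (mod int p)" and nq: "\<not> QuadRes (int p) (int (4*l+1))"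
      using leg unfolding Legendre_def by (auto split: if_splits)
    have "\<not> p dvd M"
    proof
      assume "p dvd M"
      moreover have "M = p*(4*n) + (4*l+1)" by (simp add: M_def mult_ac)
      ultimately have "p dvd (4*l+1)" by (metis dvd_add_right_iff dvd_triv_left)
      then show False using na by (simp add: cong_0_iff flip: of_nat_Suc)
    qed
    then obtain t where t: "M = t^2" using sq_extract[OF assms(1) _ sq] by blast
    have "[int t ^ 2 = int (4*l+1)] (mod int p)"
    proof -
      have h1: "int t ^ 2 = int M" using t by simp
      have h2: "int M = int p * (4 * int n) + int (4*l+1)" by (simp add: M_def algebra_simps)
      have "int t ^ 2 - int (4*l+1) = int p * (4 * int n)" using h1 h2 by simp
      then show ?thesis by (simp add: cong_iff_dvd_diff)
    qed
    then show False using nq unfolding QuadRes_def by blast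
  qed
qed

theorem corollary1p6:
  fixes p l n k :: nat
  assumes "prime p" and "odd p"
    and "1 \<le> l" and "l \<le> p - 1"
    and "Legendre (int (4 * l + 1)) (int p) = -1"
  shows "\<exists>c::int. b (2 * p ^ (2 * k + 3) * n + ((4 * l + 1) * p ^ (2 * k + 2) - 1) div 2)
                 = 4 * of_int c"
  using m_facts[OF assms, of k n] by (intro b_mod4) auto

end
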